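(* Let $\mathcal{G}=(N,\mathcal{W})$ be an SVG and let $i\neq j$ be players in $N$, where $j$ is a YES-blocker (or a NO-blocker) of $\mathcal{G}$. Let $\hat{\mathcal{G}}=\mathcal{G}^{j\to i}$ be the game obtained when $j$ fully donates its vote to $i$. Then $$RM'_i(\hat{\mathcal{G}})\le RM'_i(\mathcal{G})+RM'_j(\mathcal{G}).$$
   Context: A simple voting game (SVG) is a pair $\mathcal{G}=(N,\mathcal{W})$ with $N$ a nonempty finite set of $n$ players and $\mathcal{W}\subseteq 2^N$ monotone, $\emptyset\notin\mathcal{W}$, $N\in\mathcal{W}$. Divisions are identified with their YES-sets $S\subseteq N$; $S$ is winning iff $S\in\mathcal{W}$. Decisiveness and success: - Player $k$ is YES-decisive in $S$ if $k\in S\in\mathcal{W}$ and $S\setminus\{k\}\notin\mathcal{W}$. - Player $k$ is NO-decisive in $S$ if $k\notin S\notin\mathcal{W}$ and $S\cup\{k\}\in\mathcal{W}$. - Player $k$ is decisive if it is either. - Player $k$ is successful in $S$ if ($k\in S\in\mathcal{W}$) or ($k\notin S\notin\mathcal{W}$). Loyal children: if $S\in\mathcal{W}$, the loyal children are the sets $S\setminus\{m\}\in\mathcal{W}$ with $m\in S$. If $S\notin\mathcal{W}$, they are the sets $S\cup\{m\}\notin\mathcal{W}$ with $m\notin S$. The recursive efficacy score $\alpha_k(S)$ is defined by: - $\alpha_k(S)=1$ if $k$ is decisive in $S$; - $\alpha_k(S)=0$ if $k$ is not successful in $S$; - otherwise, $\alpha_k(S)$ is the average of $\alpha_k$ over the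 loyal children of $S$. The a priori Recursive Measure is $RM'_k=2^{-n}\sum_{S\subseteq N}\alpha_k(S)$. Blockers: $b$ is a YES-blocker if $b\in S$ for all $S\in\mathcal{W}$, and a NO-blocker if $b\notin S$ for all $S\notin\mathcal{W}$. Donation game: $\mathcal{G}^{j\to i}$ is the SVG on the same player set $N$ whose winning sets are determined as follows. For $S\subseteq N\setminus\{i,j\}$: - $S\cup\{i,j\}$ and $S\cup\{i\}$ are winning iff $S\cup\{i,j\}\in\mathcal{W}$; - $S\cup\{j\}$ and $S$ are winning iff $S\in\mathcal{W}$. In particular $j$ is a dummy in $\mathcal{G}^{j\to i}$. *)

theory Defs
  imports Complex_Main
begin

definition svg :: "'a set \<Rightarrow> 'a set set \<Rightarrow> bool" where
  "svg N W \<longleftrightarrow> finite N \<and> N \<noteq> {} \<and> W \<subseteq> Pow N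
     \<and> (\<forall>S T. S \<in> W \<and> S \<subseteq> T \<and> T \<subseteq> N \<longrightarrow> T \<in> W)
     \<and> {} \<notin> W \<and> N \<in> W"

definition yes_decisive :: "'a set set \<Rightarrow> 'a \<Rightarrow> 'a set \<Rightarrow> bool" where
  "yes_decisive W k S \<longleftrightarrow> k \<in> S \<and> S \<in> W \<and> S - {k} \<notin> W"

definition no_decisive :: "'a set set \<Rightarrow> 'a \<Rightarrow> 'a set \<Rightarrow> bool" where
  "no_decisive W k S \<longleftrightarrow> k \<notin> S \<and> S \<notin> W \<and> insert k S \<in> W"

definition decisive :: "'a set set \<Rightarrow> 'a \<Rightarrow> 'a set \<Rightarrow> bool" where
  "decisive W k S \<longleftrightarrow> yes_decisive W k S \<or> no_decisive W k S"

definition successful :: "'a set set \<Rightarrow> 'a \<Rightarrow> 'a set \<Rightarrow> bool" where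
  "successful W k S \<longleftrightarrow> (k \<in> S \<and> S \<in> W) \<or> (k \<notin> S \<and> S \<notin> W)"

definition loyal_children :: "'a set \<Rightarrow> 'a set set \<Rightarrow> 'a set \<Rightarrow> 'a set set" where
  "loyal_children N W S =
     (if S \<in> W then {S - {m} | m. m \<in> S \<and> S - {m} \<in> W}
      else {insert m S | m. m \<in> N - S \<and> insert m S \<notin> W})"

lemma loyal_children_measure:
  assumes "finite N" "S \<subseteq> N" "T \<in> loyal_children N W S"
  shows "(if T \<in> W then card T else card (N - T)) < (if S \<in> W then card S else card (N - S))"
proof (cases "S \<in> W")
  case True
  then obtain m where "m \<in> S" "T = S - {m}" "T \<in> W"
    using assms(3) by (auto simp: loyal_children_def)
  moreover have "finite S" using assms finite_subset by blast
  ultimately have "card T < card S" by (metis card_Diff1_less)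
  then show ?thesis using True \<open>T \<in> W\<close> by simp
next
  case False
  then obtain m where m: "m \<in> N - S" "T = insert m S" "T \<notin> W"
    using assms(3) by (auto simp: loyal_children_def)
  have "N - T = (N - S) - {m}" using m by auto
  moreover have "finite (N - S)" using assms by auto
  ultimately have "card (N - T) < card (N - S)" using m by (metis card_Diff1_less)
  then show ?thesis using False m by simp
qed

function alpha :: "'a set \<Rightarrow> 'a set set \<Rightarrow> 'a \<Rightarrow> 'a set \<Rightarrow> real" where
  "alpha N W k S =
     (if \<not> (finite N \<and> S \<subseteq> N) then 0
      else if decisive W k S then 1
      else if \<not> successful W k S then 0
      else (\<Sum>T\<in>loyal_children N W S. alpha N W k T) / real (card (loyal_children N W S)))"
  by pat_completeness auto
termination
proof (relation "measure (\<lambda>(N, W, k, S). if S \<in> W then card S else card (N - S))")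
  show "wf (measure (\<lambda>(N, W, k, S). if S \<in> W then card S else card (N - S)))" by simp
next
  fix N :: "'a set" and W k S T
  assume "\<not> \<not> (finite N \<and> S \<subseteq> N)" "T \<in> loyal_children N W S"
  then show "((N, W, k, T), N, W, k, S) \<in> measure (\<lambda>(N, W, k, S). if S \<in> W then card S else card (N - S))"
    using loyal_children_measure[of N S T W] by simp
qed

declare alpha.simps [simp del]

definition RM' :: "'a set \<Rightarrow> 'a set set \<Rightarrow> 'a \<Rightarrow> real" where
  "RM' N W k = (\<Sum>S\<in>Pow N. alpha N W k S) / 2 ^ card N"

definition yes_blocker :: "'a set set \<Rightarrow> 'a \<Rightarrow> bool" where
  "yes_blocker W b \<longleftrightarrow> (\<forall>S\<in>W. b \<in> S)"

definition no_blocker :: "'a set \<Rightarrow> 'a set set \<Rightarrow> 'a \<Rightarrow> bool" where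
  "no_blocker N W b \<longleftrightarrow> (\<forall>S\<in>Pow N. S \<notin> W \<longrightarrow> b \<notin> S)"

text \<open>Donation game G^{j\<rightarrow>i}: i votes as the pair (i,j) did; j becomes a dummy.\<close>

definition donate :: "'a set \<Rightarrow> 'a set set \<Rightarrow> 'a \<Rightarrow> 'a \<Rightarrow> 'a set set" where
  "donate N W j i = {T. T \<subseteq> N \<and>
      (if i \<in> T then insert i (insert j (T - {i, j})) \<in> W else T - {i, j} \<in> W)}"

end

theory Submission
  imports Defs
begin


lemma alpha_bounds: "0 \<le> alpha N W k S \<and> alpha N W k S \<le> 1"
proof (induction N W k S rule: alpha.induct)
  case (1 N W k S)
  define L where "L = loyal_children N W S"
  show ?case
  proof (cases "\<not> (finite N \<and> S \<subseteq> N) \<or> decisive W k S \<or> \<not> successful W k S")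
    case True
    then have "alpha N W k S = (if decisive W k S \<and> finite N \<and> S \<subseteq> N then 1 else 0)"
      by (subst alpha.simps) auto
    then show ?thesis by simp
  next
    case False
    have IH: "\<And>T. T \<in> L \<Longrightarrow> 0 \<le> alpha N W k T \<and> alpha N W k T \<le> 1"
      using 1 False L_def by blast
    have eq: "alpha N W k S = (\<Sum>T\<in>L. alpha N W k T) / real (card L)"
      using False L_def by (subst alpha.simps) auto
    have s0: "0 \<le> (\<Sum>T\<in>L. alpha N W k T)" using IH by (simp add: sum_nonneg)
    have s1: "(\<Sum>T\<in>L. alpha N W k T) \<le> of_nat (card L) * 1"
      using IH by (intro sum_bounded_above) auto
    show ?thesis
    proof (cases "card L = 0")
      case True then show ?thesis using eq by simp
    next
      case False
      then show ?thesis using eq s0 s1 by (simp add: divide_le_eq)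
    qed
  qed
qed

lemma alpha_ge0: "0 \<le> alpha N W k S"
  by (metis alpha_bounds)
lemma alpha_le1: "alpha N W k S \<le> 1"
  by (metis alpha_bounds)

lemma alpha_dec: "finite N \<Longrightarrow> S \<subseteq> N \<Longrightarrow> decisive W k S \<Longrightarrow> alpha N W k S = 1"
  by (subst alpha.simps) auto

lemma alpha_uns: "finite N \<Longrightarrow> S \<subseteq> N \<Longrightarrow> \<not> successful W k S \<Longrightarrow> alpha N W k S = 0"
  by (subst alpha.simps) (auto simp: decisive_def yes_decisive_def no_decisive_def successful_def)

lemma alpha_lose:
  assumes "finite N" "S \<subseteq> N" "S \<notin> W" "k \<notin> S" "\<not> decisive W k S"
  shows "real (card {m\<in>N-S. insert m S \<notin> W}) * alpha N W k S
     = (\<Sum>m\<in>{m\<in>N-S. insert m S \<notin> W}. alpha N W k (insert m S))"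
proof -
  define M where "M = {m\<in>N-S. insert m S \<notin> W}"
  have L: "loyal_children N W S = (\<lambda>m. insert m S) ` M"
    using assms(3) by (auto simp: loyal_children_def M_def)
  have inj: "inj_on (\<lambda>m. insert m S) M"
    by (auto simp: inj_on_def M_def)
  have fin: "finite M" using assms(1) by (simp add: M_def)
  have succ: "successful W k S" using assms by (simp add: successful_def)
  have eq: "alpha N W k S = (\<Sum>m\<in>M. alpha N W k (insert m S)) / real (card M)"
    using assms succ by (subst alpha.simps) (simp add: L sum.reindex[OF inj] card_image[OF inj])
  have "real (card M) * alpha N W k S = (\<Sum>m\<in>M. alpha N W k (insert m S))"
  proof (cases "M = {}")
    case True then show ?thesis by simp
  next
    case False
    then have "card M > 0" using fin by auto
    then show ?thesis using eq by simp
  qed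
  then show ?thesis by (simp add: M_def)
qed

lemma alpha_win:
  assumes "finite N" "S \<subseteq> N" "S \<in> W" "k \<in> S" "\<not> decisive W k S"
  shows "real (card {m\<in>S. S - {m} \<in> W}) * alpha N W k S
     = (\<Sum>m\<in>{m\<in>S. S - {m} \<in> W}. alpha N W k (S - {m}))"
proof -
  define M where "M = {m\<in>S. S - {m} \<in> W}"
  have L: "loyal_children N W S = (\<lambda>m. S - {m}) ` M"
    using assms(3) by (auto simp: loyal_children_def M_def)
  have inj: "inj_on (\<lambda>m. S - {m}) M"
    by (auto simp: inj_on_def M_def)
  have "finite S" using assms(1,2) finite_subset by blast
  then have fin: "finite M" by (simp add: M_def)
  have succ: "successful W k S" using assms by (simp add: successful_def)
  have eq: "alpha N W k S = (\<Sum>m\<in>M. alpha N W k (S - {m})) / real (card M)"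
    using assms succ by (subst alpha.simps) (simp add: L sum.reindex[OF inj] card_image[OF inj])
  have "real (card M) * alpha N W k S = (\<Sum>m\<in>M. alpha N W k (S - {m}))"
  proof (cases "M = {}")
    case True then show ?thesis by simp
  next
    case False
    then have "card M > 0" using fin by auto
    then show ?thesis using eq by simp
  qed
  then show ?thesis by (simp add: M_def)
qed




lemma svg_mono: "svg N W \<Longrightarrow> S \<in> W \<Longrightarrow> S \<subseteq> T \<Longrightarrow> T \<subseteq> N \<Longrightarrow> T \<in> W"
  unfolding svg_def by blast

lemma yb_P:
  assumes svg: "svg N W" and iN: "i \<in> N" and jN: "j \<in> N" and ij: "i \<noteq> j"
    and yb: "yes_blocker W j"
  shows "S \<subseteq> N - {i,j} \<Longrightarrow> alpha N W j (insert i S) \<le> alpha N W i S + alpha N W j S"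
proof (induction "card (N - S)" arbitrary: S rule: less_induct)
  case less
  have finN: "finite N" using svg by (simp add: svg_def)
  have ybW: "\<And>X. X \<in> W \<Longrightarrow> j \<in> X" using yb by (simp add: yes_blocker_def)
  define K where "K = N - {i,j} - S"
  have finK: "finite K" using finN by (simp add: K_def)
  have iK: "i \<notin> K" and jK: "j \<notin> K" by (auto simp: K_def)
  have SN: "S \<subseteq> N" and iS: "i \<notin> S" and jS: "j \<notin> S" using less.prems by auto
  have NS: "N - S = insert i (insert j K)" using SN iS jS iN jN by (auto simp: K_def)
  have cNS: "card (N - S) = card K + 2" using NS finK iK jK ij by simp
  define x where "x = alpha N W j (insert i S)"
  have x1: "x \<le> 1" by (simp add: x_def alpha_le1)
  show ?case
  proof (cases "insert j S \<in> W")
    case True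
    have "alpha N W j S = 1"
      using finN SN jS True ybW[of S] by (intro alpha_dec) (auto simp: decisive_def no_decisive_def)
    then show ?thesis using alpha_ge0[of N W i S] x1 by (simp add: x_def)
  next
    case jSW: False
    have SW: "S \<notin> W" using ybW jS by blast
    have iSW: "insert i S \<notin> W" using ybW jS ij by blast
    have M: "{m\<in>N-S. insert m S \<notin> W} = N - S"
      using ybW jSW jS by auto
    have eqJ: "real (card (N-S)) * alpha N W j S = (\<Sum>m\<in>N-S. alpha N W j (insert m S))"
      using alpha_lose[of N S W j] finN SN SW jS jSW M
      by (simp add: decisive_def yes_decisive_def no_decisive_def)
    have eqI: "real (card (N-S)) * alpha N W i S = (\<Sum>m\<in>N-S. alpha N W i (insert m S))"
      using alpha_lose[of N S W i] finN SN SW iS iSW M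
      by (simp add: decisive_def yes_decisive_def no_decisive_def)
    define f where "f = (\<lambda>T. alpha N W i T + alpha N W j T)"
    have sumsplit: "real (card (N-S)) * (alpha N W i S + alpha N W j S)
        = (\<Sum>m\<in>K. f (insert m S)) + f (insert i S) + f (insert j S)"
      using eqI eqJ NS finK iK jK ij
      by (simp add: distrib_left sum.distrib f_def algebra_simps)
    have IH: "\<And>m. m \<in> K \<Longrightarrow> alpha N W j (insert i (insert m S)) \<le> f (insert m S)"
    proof -
      fix m assume mK: "m \<in> K"
      have "N - insert m S = (N - S) - {m}" by auto
      moreover have "m \<in> N - S" using mK by (simp add: K_def)
      ultimately have "card (N - insert m S) < card (N - S)"
        using finN by (metis card_Diff1_less finite_Diff)
      moreover have "insert m S \<subseteq> N - {i,j}" using mK less.prems by (auto simp: K_def)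
      ultimately show "alpha N W j (insert i (insert m S)) \<le> f (insert m S)"
        unfolding f_def by (rule less.hyps)
    qed
    have sumIH: "(\<Sum>m\<in>K. alpha N W j (insert i (insert m S))) \<le> (\<Sum>m\<in>K. f (insert m S))"
      using IH by (rule sum_mono)
    have key: "real (card K + 2) * x \<le> (\<Sum>m\<in>K. alpha N W j (insert i (insert m S))) + x
                 + alpha N W i (insert j S)"
    proof (cases "insert i (insert j S) \<in> W")
      case True
      have xe: "x = 1"
        unfolding x_def using finN SN iN iSW True jS ij
        by (intro alpha_dec) (auto simp: decisive_def no_decisive_def insert_commute)
      have "\<And>m. m \<in> K \<Longrightarrow> alpha N W j (insert i (insert m S)) = 1"
      proof -
        fix m assume mK: "m \<in> K"
        have "insert i (insert m S) \<notin> W" using ybW jS jK mK ij by blast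
        moreover have "insert j (insert i (insert m S)) \<in> W"
          by (rule svg_mono[OF svg True]) (use mK SN iN jN in \<open>auto simp: K_def\<close>)
        moreover have "insert i (insert m S) \<subseteq> N" using mK SN iN by (auto simp: K_def)
        ultimately show "alpha N W j (insert i (insert m S)) = 1"
          using finN jS jK mK ij
          by (intro alpha_dec) (auto simp: decisive_def no_decisive_def)
      qed
      then have s: "(\<Sum>m\<in>K. alpha N W j (insert i (insert m S))) = card K" by simp
      have "alpha N W i (insert j S) = 1"
        using finN SN jN iS ij jSW True
        by (intro alpha_dec) (auto simp: decisive_def no_decisive_def)
      then show ?thesis using s xe by simp
    next
      case False
      have M2: "{m\<in>N-insert i S. insert m (insert i S) \<notin> W} = insert j K"
        using False ybW iN jN SN iS jS ij jK by (auto simp: K_def insert_commute)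
      have "real (card (insert j K)) * x = (\<Sum>m\<in>insert j K. alpha N W j (insert m (insert i S)))"
        using alpha_lose[of N "insert i S" W j] finN SN iN iSW jS ij False M2
        by (simp add: x_def decisive_def yes_decisive_def no_decisive_def insert_commute)
      moreover have "alpha N W j (insert j (insert i S)) = 0"
        using finN SN iN jN False by (intro alpha_uns) (auto simp: successful_def insert_commute)
      ultimately have "real (card K + 1) * x = (\<Sum>m\<in>K. alpha N W j (insert i (insert m S)))"
        using finK jK by (simp add: insert_commute)
      then show ?thesis using alpha_ge0[of N W i "insert j S"] by (simp add: algebra_simps)
    qed
    have "real (card K + 2) * x \<le> real (card K + 2) * (alpha N W i S + alpha N W j S)"
      using key sumIH sumsplit cNS alpha_ge0[of N W i "insert i S"] alpha_ge0[of N W j "insert j S"]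
      by (simp add: f_def x_def)
    then show ?thesis by (simp add: x_def)
  qed
qed




lemma nb_Q:
  assumes svg: "svg N W" and iN: "i \<in> N" and jN: "j \<in> N" and ij: "i \<noteq> j"
    and nb: "no_blocker N W j"
  shows "R \<subseteq> N - {i,j} \<Longrightarrow> alpha N W j (insert j R)
           \<le> alpha N W i (insert i (insert j R)) + alpha N W j (insert i (insert j R))"
proof (induction "card R" arbitrary: R rule: less_induct)
  case less
  have finN: "finite N" using svg by (simp add: svg_def)
  have nbW: "\<And>X. X \<subseteq> N \<Longrightarrow> j \<in> X \<Longrightarrow> X \<in> W" using nb by (auto simp: no_blocker_def)
  have RN: "R \<subseteq> N" and iR: "i \<notin> R" and jR: "j \<notin> R" using less.prems by auto
  have finR: "finite R" using finN RN finite_subset by blast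
  define T where "T = insert i (insert j R)"
  have TN: "T \<subseteq> N" using RN iN jN by (simp add: T_def)
  have cT: "card T = card R + 2" using finR iR jR ij by (simp add: T_def)
  define x where "x = alpha N W j (insert j R)"
  have x1: "x \<le> 1" by (simp add: x_def alpha_le1)
  have TW: "T \<in> W" using nbW[OF TN] by (simp add: T_def)
  have Tj: "T - {j} = insert i R" using jR ij by (auto simp: T_def)
  have Ti: "T - {i} = insert j R" using iR ij by (auto simp: T_def)
  have Tm: "\<And>m. m \<in> R \<Longrightarrow> T - {m} = insert i (insert j (R - {m}))" using iR jR by (auto simp: T_def)
  show ?case
  proof (cases "insert i R \<in> W")
    case False
    have "alpha N W j T = 1"
      using finN TN TW Tj False by (intro alpha_dec) (auto simp: decisive_def yes_decisive_def T_def)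
    then show ?thesis using alpha_ge0[of N W i T] x1 by (simp add: T_def x_def)
  next
    case iRW: True
    have M: "{m\<in>T. T - {m} \<in> W} = T"
    proof -
      have "\<And>m. m \<in> T \<Longrightarrow> T - {m} \<in> W"
      proof -
        fix m assume "m \<in> T"
        show "T - {m} \<in> W"
        proof (cases "m = j")
          case True then show ?thesis using Tj iRW by simp
        next
          case False then show ?thesis using TN by (intro nbW) (auto simp: T_def)
        qed
      qed
      then show ?thesis by auto
    qed
    have eqJ: "real (card T) * alpha N W j T = (\<Sum>m\<in>T. alpha N W j (T - {m}))"
      using alpha_win[of N T W j] finN TN TW M Tj iRW
      by (simp add: decisive_def yes_decisive_def no_decisive_def T_def)
    have eqI: "real (card T) * alpha N W i T = (\<Sum>m\<in>T. alpha N W i (T - {m}))"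
      using alpha_win[of N T W i] finN TN TW M Ti nbW[of "insert j R"] RN jN
      by (simp add: decisive_def yes_decisive_def no_decisive_def T_def)
    define f where "f = (\<lambda>T. alpha N W i T + alpha N W j T)"
    have "real (card T) * (alpha N W i T + alpha N W j T) = (\<Sum>m\<in>T. f (T - {m}))"
      using eqI eqJ by (simp add: distrib_left sum.distrib f_def)
    also have "\<dots> = f (T - {i}) + f (T - {j}) + (\<Sum>m\<in>R. f (T - {m}))"
      using finR iR jR ij by (simp add: T_def)
    also have "(\<Sum>m\<in>R. f (T - {m})) = (\<Sum>m\<in>R. f (insert i (insert j (R - {m}))))"
      using Tm by (intro sum.cong) auto
    finally have sumsplit: "real (card T) * (alpha N W i T + alpha N W j T)
        = f (insert j R) + f (insert i R) + (\<Sum>m\<in>R. f (insert i (insert j (R - {m}))))"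
      using Ti Tj by simp
    have IH: "\<And>m. m \<in> R \<Longrightarrow> alpha N W j (insert j (R - {m})) \<le> f (insert i (insert j (R - {m})))"
    proof -
      fix m assume mR: "m \<in> R"
      have "card (R - {m}) < card R" using finR mR by (metis card_Diff1_less)
      moreover have "R - {m} \<subseteq> N - {i,j}" using less.prems by auto
      ultimately show "alpha N W j (insert j (R - {m})) \<le> f (insert i (insert j (R - {m})))"
        unfolding f_def by (rule less.hyps)
    qed
    have sumIH: "(\<Sum>m\<in>R. alpha N W j (insert j (R - {m}))) \<le> (\<Sum>m\<in>R. f (insert i (insert j (R - {m}))))"
      using IH by (rule sum_mono)
    have key: "real (card R + 2) * x \<le> (\<Sum>m\<in>R. alpha N W j (insert j (R - {m}))) + x
                 + alpha N W i (insert i R)"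
    proof (cases "R \<in> W")
      case False
      have jRW: "insert j R \<in> W" using nbW RN jN by simp
      have xe: "x = 1"
        unfolding x_def using finN RN jN jRW False jR
        by (intro alpha_dec) (auto simp: decisive_def yes_decisive_def)
      have "\<And>m. m \<in> R \<Longrightarrow> alpha N W j (insert j (R - {m})) = 1"
      proof -
        fix m assume mR: "m \<in> R"
        have "R - {m} \<notin> W"
        proof
          assume "R - {m} \<in> W"
          then have "R \<in> W" by (rule svg_mono[OF svg]) (use RN in auto)
          then show False using False by simp
        qed
        moreover have "insert j (R - {m}) \<in> W" using RN jN by (intro nbW) auto
        moreover have "insert j (R - {m}) - {j} = R - {m}" using jR by auto
        ultimately show "alpha N W j (insert j (R - {m})) = 1"
          using finN RN jN by (intro alpha_dec) (auto simp: decisive_def yes_decisive_def)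
      qed
      then have s: "(\<Sum>m\<in>R. alpha N W j (insert j (R - {m}))) = card R" by simp
      have "alpha N W i (insert i R) = 1"
        using finN RN iN iR iRW False
        by (intro alpha_dec) (auto simp: decisive_def yes_decisive_def)
      then show ?thesis using s xe by simp
    next
      case True
      have jRW: "insert j R \<in> W" using nbW RN jN by simp
      have M2: "{m\<in>insert j R. insert j R - {m} \<in> W} = insert j R"
      proof -
        have "\<And>m. m \<in> insert j R \<Longrightarrow> insert j R - {m} \<in> W"
        proof -
          fix m assume m: "m \<in> insert j R"
          show "insert j R - {m} \<in> W"
          proof (cases "m = j")
            case True then show ?thesis using \<open>R \<in> W\<close> jR by simp
          next
            case False then show ?thesis using RN jN m by (intro nbW) auto
          qed
        qed
        then show ?thesis by auto
      qed
      have "real (card (insert j R)) * x = (\<Sum>m\<in>insert j R. alpha N W j (insert j R - {m}))"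
        using alpha_win[of N "insert j R" W j] finN RN jN jRW M2 True jR
        by (simp add: x_def decisive_def yes_decisive_def no_decisive_def)
      also have "\<dots> = alpha N W j R + (\<Sum>m\<in>R. alpha N W j (insert j R - {m}))"
        using finR jR by simp
      also have "(\<Sum>m\<in>R. alpha N W j (insert j R - {m})) = (\<Sum>m\<in>R. alpha N W j (insert j (R - {m})))"
      proof (rule sum.cong)
        fix m assume "m \<in> R"
        then have "insert j R - {m} = insert j (R - {m})" using jR by auto
        then show "alpha N W j (insert j R - {m}) = alpha N W j (insert j (R - {m}))" by simp
      qed simp
      also have "alpha N W j R = 0"
        using finN RN jR True by (intro alpha_uns) (auto simp: successful_def)
      finally have "real (card R + 1) * x = (\<Sum>m\<in>R. alpha N W j (insert j (R - {m})))"
        using finR jR by simp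
      then show ?thesis using alpha_ge0[of N W i "insert i R"] by (simp add: algebra_simps)
    qed
    have "real (card R + 2) * x \<le> real (card R + 2) * (alpha N W i T + alpha N W j T)"
      using key sumIH sumsplit cT alpha_ge0[of N W i "insert j R"] alpha_ge0[of N W j "insert i R"]
      by (simp add: f_def x_def)
    then show ?thesis by (simp add: T_def x_def)
  qed
qed




lemma don_noi: "T \<subseteq> N \<Longrightarrow> i \<notin> T \<Longrightarrow> (T \<in> donate N W j i \<longleftrightarrow> T - {j} \<in> W)"
proof -
  assume "T \<subseteq> N" "i \<notin> T"
  moreover have "T - {i,j} = T - {j}" using \<open>i \<notin> T\<close> by auto
  ultimately show ?thesis by (simp add: donate_def)
qed

lemma don_i: "T \<subseteq> N \<Longrightarrow> i \<in> T \<Longrightarrow> (T \<in> donate N W j i \<longleftrightarrow> insert i (insert j T) \<in> W)"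
proof -
  assume "T \<subseteq> N" "i \<in> T"
  moreover have "insert i (insert j (T - {i,j})) = insert i (insert j T)" by auto
  ultimately show ?thesis by (simp add: donate_def)
qed

lemma yb_x:
  assumes svg: "svg N W" and iN: "i \<in> N" and jN: "j \<in> N" and ij: "i \<noteq> j"
    and yb: "yes_blocker W j" and R: "R \<subseteq> N - {i,j}" and U: "insert i (insert j R) \<notin> W"
  shows "real (card (N - {i,j} - R) + 1) * alpha N W j (insert i R)
       = (\<Sum>m\<in>N - {i,j} - R. alpha N W j (insert i (insert m R)))"
proof -
  have finN: "finite N" using svg by (simp add: svg_def)
  have ybW: "\<And>X. X \<in> W \<Longrightarrow> j \<in> X" using yb by (simp add: yes_blocker_def)
  define K where "K = N - {i,j} - R"
  have finK: "finite K" using finN by (simp add: K_def)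
  have jK: "j \<notin> K" by (auto simp: K_def)
  have RN: "R \<subseteq> N" and iR: "i \<notin> R" and jR: "j \<notin> R" using R by auto
  have iRW: "insert i R \<notin> W" using ybW jR ij by blast
  have M2: "{m\<in>N-insert i R. insert m (insert i R) \<notin> W} = insert j K"
  proof -
    have "\<And>m. m \<in> K \<Longrightarrow> insert m (insert i R) \<notin> W" using ybW jK ij jR by blast
    moreover have "insert j (insert i R) \<notin> W" using U by (simp add: insert_commute)
    ultimately show ?thesis using RN iR jR iN jN ij by (auto simp: K_def)
  qed
  have "real (card (insert j K)) * alpha N W j (insert i R)
      = (\<Sum>m\<in>insert j K. alpha N W j (insert m (insert i R)))"
    using alpha_lose[of N "insert i R" W j] finN RN iN iRW jR ij U M2
    by (simp add: decisive_def yes_decisive_def no_decisive_def insert_commute)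
  moreover have "alpha N W j (insert j (insert i R)) = 0"
    using finN RN iN jN U by (intro alpha_uns) (auto simp: successful_def insert_commute)
  moreover have "(\<Sum>m\<in>K. alpha N W j (insert m (insert i R))) = (\<Sum>m\<in>K. alpha N W j (insert i (insert m R)))"
    by (simp add: insert_commute)
  ultimately show ?thesis using finK jK by (simp add: K_def)
qed




lemma yb_hat:
  assumes svg: "svg N W" and iN: "i \<in> N" and jN: "j \<in> N" and ij: "i \<noteq> j"
    and yb: "yes_blocker W j"
  shows "R \<subseteq> N - {i,j} \<Longrightarrow>
     alpha N (donate N W j i) i R = alpha N W j (insert i R) \<and>
     alpha N (donate N W j i) i (insert j R) = alpha N W j (insert i R)"
proof (induction "card (N - R)" arbitrary: R rule: less_induct)
  case less
  define Wh where "Wh = donate N W j i"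
  have finN: "finite N" using svg by (simp add: svg_def)
  have ybW: "\<And>X. X \<in> W \<Longrightarrow> j \<in> X" using yb by (simp add: yes_blocker_def)
  define K where "K = N - {i,j} - R"
  have finK: "finite K" using finN by (simp add: K_def)
  have iK: "i \<notin> K" and jK: "j \<notin> K" by (auto simp: K_def)
  have RN: "R \<subseteq> N" and iR: "i \<notin> R" and jR: "j \<notin> R" using less.prems by auto
  have NR: "N - R = insert i (insert j K)" using RN iR jR iN jN by (auto simp: K_def)
  have NRj: "N - insert j R = insert i K" using RN iR jR iN jN ij by (auto simp: K_def)
  have cK: "card (N - R) = card K + 2" using NR finK iK jK ij by simp
  define x where "x = alpha N W j (insert i R)"
  have RWh: "R \<notin> Wh" using don_noi[OF RN iR, of W j] ybW jR unfolding Wh_def by blast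
  have RjWh: "insert j R \<notin> Wh"
  proof -
    have "insert j R - {j} = R" using jR by auto
    then show ?thesis using don_noi[of "insert j R" N i W j] RN jN iR ij ybW jR unfolding Wh_def by auto
  qed
  have RiWh: "insert i R \<in> Wh \<longleftrightarrow> insert i (insert j R) \<in> W"
  proof -
    have "insert i (insert j (insert i R)) = insert i (insert j R)" by auto
    then show ?thesis using don_i[of "insert i R" N i W j] RN iN unfolding Wh_def by simp
  qed
  have RijWh: "insert i (insert j R) \<in> Wh \<longleftrightarrow> insert i (insert j R) \<in> W"
  proof -
    have "insert i (insert j (insert i (insert j R))) = insert i (insert j R)" by auto
    then show ?thesis using don_i[of "insert i (insert j R)" N i W j] RN iN jN unfolding Wh_def by simp
  qed
  show ?case
  proof (cases "insert i (insert j R) \<in> W")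
    case True
    have x1: "x = 1"
      unfolding x_def using finN RN iN ybW[of "insert i R"] jR ij True
      by (intro alpha_dec) (auto simp: decisive_def no_decisive_def insert_commute)
    have a1: "alpha N Wh i R = 1"
      using finN RN iR RWh RiWh True by (intro alpha_dec) (auto simp: decisive_def no_decisive_def)
    have a2: "alpha N Wh i (insert j R) = 1"
      using finN RN jN iR ij RjWh RijWh True
      by (intro alpha_dec) (auto simp: decisive_def no_decisive_def)
    show ?thesis using x1 a1 a2 by (simp add: x_def Wh_def)
  next
    case U: False
    have IH: "\<And>m. m \<in> K \<Longrightarrow> alpha N Wh i (insert m R) = alpha N W j (insert i (insert m R))
         \<and> alpha N Wh i (insert j (insert m R)) = alpha N W j (insert i (insert m R))"
    proof -
      fix m assume mK: "m \<in> K"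
      have "N - insert m R = (N - R) - {m}" by auto
      moreover have "m \<in> N - R" using mK by (simp add: K_def)
      ultimately have "card (N - insert m R) < card (N - R)"
        using finN by (metis card_Diff1_less finite_Diff)
      moreover have "insert m R \<subseteq> N - {i,j}" using mK less.prems by (auto simp: K_def)
      ultimately show "alpha N Wh i (insert m R) = alpha N W j (insert i (insert m R))
         \<and> alpha N Wh i (insert j (insert m R)) = alpha N W j (insert i (insert m R))"
        unfolding Wh_def by (rule less.hyps)
    qed
    have xeq: "real (card K + 1) * x = (\<Sum>m\<in>K. alpha N W j (insert i (insert m R)))"
      using yb_x[OF svg iN jN ij yb less.prems U] by (simp add: x_def K_def)
    have zero: "alpha N Wh i (insert i (insert j R)) = 0"
      using finN RN iN jN RijWh U by (intro alpha_uns) (auto simp: successful_def)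
    have zero2: "alpha N Wh i (insert i R) = 0"
      using finN RN iN RiWh U by (intro alpha_uns) (auto simp: successful_def)
    have Mj: "{m\<in>N-insert j R. insert m (insert j R) \<notin> Wh} = insert i K"
    proof -
      have "\<And>m. m \<in> K \<Longrightarrow> insert m (insert j R) \<notin> Wh"
      proof -
        fix m assume mK: "m \<in> K"
        have sub: "insert m (insert j R) \<subseteq> N" using mK RN jN by (auto simp: K_def)
        have "insert m (insert j R) - {j} = insert m R" using mK jR jK by auto
        moreover have "insert m R \<notin> W" using ybW jR jK mK by blast
        moreover have "i \<notin> insert m (insert j R)" using iK mK iR ij by auto
        ultimately show "insert m (insert j R) \<notin> Wh"
          using don_noi[OF sub, of i W j] unfolding Wh_def by simp
      qed
      moreover have "insert i (insert j R) \<notin> Wh" using RijWh U by simp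
      ultimately show ?thesis using NRj by auto
    qed
    have eqj: "real (card (insert i K)) * alpha N Wh i (insert j R)
        = (\<Sum>m\<in>insert i K. alpha N Wh i (insert m (insert j R)))"
      using alpha_lose[of N "insert j R" Wh i] finN RN jN RjWh iR ij RijWh U Mj
      by (simp add: decisive_def yes_decisive_def no_decisive_def)
    have "(\<Sum>m\<in>insert i K. alpha N Wh i (insert m (insert j R)))
        = (\<Sum>m\<in>K. alpha N W j (insert i (insert m R)))"
      using finK iK zero IH by (simp add: insert_commute)
    then have "real (card K + 1) * alpha N Wh i (insert j R) = real (card K + 1) * x"
      using eqj xeq finK iK zero by simp
    then have aj: "alpha N Wh i (insert j R) = x"
      by (metis mult_cancel_left of_nat_eq_0_iff add_eq_0_iff_both_eq_0 one_neq_zero)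
    have Mr: "{m\<in>N-R. insert m R \<notin> Wh} = N - R"
    proof -
      have "\<And>m. m \<in> K \<Longrightarrow> insert m R \<notin> Wh"
      proof -
        fix m assume mK: "m \<in> K"
        have sub: "insert m R \<subseteq> N" using mK RN by (auto simp: K_def)
        have "insert m R - {j} = insert m R" using mK jR jK by auto
        moreover have "insert m R \<notin> W" using ybW jR jK mK by blast
        moreover have "i \<notin> insert m R" using iK mK iR by auto
        ultimately show "insert m R \<notin> Wh"
          using don_noi[OF sub, of i W j] unfolding Wh_def by simp
      qed
      then show ?thesis using NR RiWh U RjWh by auto
    qed
    have eqr: "real (card (N - R)) * alpha N Wh i R = (\<Sum>m\<in>N-R. alpha N Wh i (insert m R))"
      using alpha_lose[of N R Wh i] finN RN RWh iR RiWh U Mr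
      by (simp add: decisive_def yes_decisive_def no_decisive_def)
    have "(\<Sum>m\<in>N-R. alpha N Wh i (insert m R)) = x + (\<Sum>m\<in>K. alpha N W j (insert i (insert m R)))"
      using NR finK iK jK ij zero2 aj IH by simp
    then have "real (card K + 2) * alpha N Wh i R = real (card K + 2) * x"
      using eqr cK xeq by (simp add: algebra_simps)
    then have ar: "alpha N Wh i R = x" by simp
    show ?thesis using ar aj by (simp add: x_def Wh_def)
  qed
qed




lemma nb_y:
  assumes svg: "svg N W" and iN: "i \<in> N" and jN: "j \<in> N" and ij: "i \<noteq> j"
    and nb: "no_blocker N W j" and R: "R \<subseteq> N - {i,j}" and RW: "R \<in> W"
  shows "real (card R + 1) * alpha N W j (insert j R) = (\<Sum>m\<in>R. alpha N W j (insert j (R - {m})))"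
proof -
  have finN: "finite N" using svg by (simp add: svg_def)
  have nbW: "\<And>X. X \<subseteq> N \<Longrightarrow> j \<in> X \<Longrightarrow> X \<in> W" using nb by (auto simp: no_blocker_def)
  have RN: "R \<subseteq> N" and iR: "i \<notin> R" and jR: "j \<notin> R" using R by auto
  have finR: "finite R" using finN RN finite_subset by blast
  have jRW: "insert j R \<in> W" using nbW RN jN by simp
  have M2: "{m\<in>insert j R. insert j R - {m} \<in> W} = insert j R"
  proof -
    have "\<And>m. m \<in> insert j R \<Longrightarrow> insert j R - {m} \<in> W"
    proof -
      fix m assume m: "m \<in> insert j R"
      show "insert j R - {m} \<in> W"
      proof (cases "m = j")
        case True then show ?thesis using RW jR by simp
      next
        case False then show ?thesis using RN jN m by (intro nbW) auto
      qed
    qed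
    then show ?thesis by auto
  qed
  have "real (card (insert j R)) * alpha N W j (insert j R) = (\<Sum>m\<in>insert j R. alpha N W j (insert j R - {m}))"
    using alpha_win[of N "insert j R" W j] finN RN jN jRW M2 RW jR
    by (simp add: decisive_def yes_decisive_def no_decisive_def)
  also have "\<dots> = alpha N W j R + (\<Sum>m\<in>R. alpha N W j (insert j R - {m}))"
    using finR jR by simp
  also have "(\<Sum>m\<in>R. alpha N W j (insert j R - {m})) = (\<Sum>m\<in>R. alpha N W j (insert j (R - {m})))"
  proof (rule sum.cong)
    fix m assume "m \<in> R"
    then have "insert j R - {m} = insert j (R - {m})" using jR by auto
    then show "alpha N W j (insert j R - {m}) = alpha N W j (insert j (R - {m}))" by simp
  qed simp
  also have "alpha N W j R = 0"
    using finN RN jR RW by (intro alpha_uns) (auto simp: successful_def)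
  finally show ?thesis using finR jR by simp
qed

lemma nb_hat:
  assumes svg: "svg N W" and iN: "i \<in> N" and jN: "j \<in> N" and ij: "i \<noteq> j"
    and nb: "no_blocker N W j"
  shows "R \<subseteq> N - {i,j} \<Longrightarrow>
     alpha N (donate N W j i) i (insert i R) = alpha N W j (insert j R) \<and>
     alpha N (donate N W j i) i (insert i (insert j R)) = alpha N W j (insert j R)"
proof (induction "card R" arbitrary: R rule: less_induct)
  case less
  define Wh where "Wh = donate N W j i"
  have finN: "finite N" using svg by (simp add: svg_def)
  have nbW: "\<And>X. X \<subseteq> N \<Longrightarrow> j \<in> X \<Longrightarrow> X \<in> W" using nb by (auto simp: no_blocker_def)
  have RN: "R \<subseteq> N" and iR: "i \<notin> R" and jR: "j \<notin> R" using less.prems by auto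
  have finR: "finite R" using finN RN finite_subset by blast
  define y where "y = alpha N W j (insert j R)"
  have RWh: "R \<in> Wh \<longleftrightarrow> R \<in> W"
  proof -
    have "R - {j} = R" using jR by auto
    then show ?thesis using don_noi[OF RN iR, of W j] unfolding Wh_def by simp
  qed
  have RjWh: "insert j R \<in> Wh \<longleftrightarrow> R \<in> W"
  proof -
    have "insert j R - {j} = R" using jR by auto
    then show ?thesis using don_noi[of "insert j R" N i W j] RN jN iR ij unfolding Wh_def by auto
  qed
  have iWh: "\<And>X. X \<subseteq> N \<Longrightarrow> i \<in> X \<Longrightarrow> X \<in> Wh"
  proof -
    fix X assume X: "X \<subseteq> N" "i \<in> X"
    have "insert i (insert j X) \<in> W" using X jN by (intro nbW) auto
    then show "X \<in> Wh" using don_i[OF X, of W j] unfolding Wh_def by simp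
  qed
  have RiWh: "insert i R \<in> Wh" using RN iN by (intro iWh) auto
  have RijWh: "insert i (insert j R) \<in> Wh" using RN iN jN by (intro iWh) auto
  show ?case
  proof (cases "R \<in> W")
    case False
    have y1: "y = 1"
      unfolding y_def using finN RN jN nbW[of "insert j R"] jR False
      by (intro alpha_dec) (auto simp: decisive_def yes_decisive_def)
    have "insert i R - {i} = R" using iR by auto
    then have a1: "alpha N Wh i (insert i R) = 1"
      using finN RN iN RWh RiWh False by (intro alpha_dec) (auto simp: decisive_def yes_decisive_def)
    have "insert i (insert j R) - {i} = insert j R" using iR ij by auto
    then have a2: "alpha N Wh i (insert i (insert j R)) = 1"
      using finN RN jN iN RjWh RijWh False
      by (intro alpha_dec) (auto simp: decisive_def yes_decisive_def)
    show ?thesis using y1 a1 a2 by (simp add: y_def Wh_def)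
  next
    case RW: True
    have IH: "\<And>m. m \<in> R \<Longrightarrow> alpha N Wh i (insert i (R - {m})) = alpha N W j (insert j (R - {m}))
         \<and> alpha N Wh i (insert i (insert j (R - {m}))) = alpha N W j (insert j (R - {m}))"
    proof -
      fix m assume mR: "m \<in> R"
      have "card (R - {m}) < card R" using finR mR by (metis card_Diff1_less)
      moreover have "R - {m} \<subseteq> N - {i,j}" using less.prems by auto
      ultimately show "alpha N Wh i (insert i (R - {m})) = alpha N W j (insert j (R - {m}))
         \<and> alpha N Wh i (insert i (insert j (R - {m}))) = alpha N W j (insert j (R - {m}))"
        unfolding Wh_def by (rule less.hyps)
    qed
    have yeq: "real (card R + 1) * y = (\<Sum>m\<in>R. alpha N W j (insert j (R - {m})))"
      using nb_y[OF svg iN jN ij nb less.prems RW] by (simp add: y_def)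
    have zR: "alpha N Wh i R = 0"
      using finN RN iR RWh RW by (intro alpha_uns) (auto simp: successful_def)
    have zRj: "alpha N Wh i (insert j R) = 0"
      using finN RN jN iR ij RjWh RW by (intro alpha_uns) (auto simp: successful_def)
    have Mi: "{m\<in>insert i R. insert i R - {m} \<in> Wh} = insert i R"
    proof -
      have "\<And>m. m \<in> insert i R \<Longrightarrow> insert i R - {m} \<in> Wh"
      proof -
        fix m assume m: "m \<in> insert i R"
        show "insert i R - {m} \<in> Wh"
        proof (cases "m = i")
          case True then show ?thesis using RWh RW iR by simp
        next
          case False then show ?thesis using RN iN m by (intro iWh) auto
        qed
      qed
      then show ?thesis by auto
    qed
    have "real (card (insert i R)) * alpha N Wh i (insert i R)
        = (\<Sum>m\<in>insert i R. alpha N Wh i (insert i R - {m}))"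
      using alpha_win[of N "insert i R" Wh i] finN RN iN RiWh Mi RWh RW iR
      by (simp add: decisive_def yes_decisive_def no_decisive_def)
    also have "\<dots> = alpha N Wh i R + (\<Sum>m\<in>R. alpha N Wh i (insert i R - {m}))"
      using finR iR by simp
    also have "(\<Sum>m\<in>R. alpha N Wh i (insert i R - {m})) = (\<Sum>m\<in>R. alpha N W j (insert j (R - {m})))"
    proof (rule sum.cong)
      fix m assume m: "m \<in> R"
      then have "insert i R - {m} = insert i (R - {m})" using iR by auto
      then show "alpha N Wh i (insert i R - {m}) = alpha N W j (insert j (R - {m}))" using IH[OF m] by simp
    qed simp
    finally have "real (card R + 1) * alpha N Wh i (insert i R) = real (card R + 1) * y"
      using finR iR zR yeq by simp
    then have ai: "alpha N Wh i (insert i R) = y"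
      by (metis mult_cancel_left of_nat_eq_0_iff add_eq_0_iff_both_eq_0 one_neq_zero)
    define T where "T = insert i (insert j R)"
    have Tm: "\<And>m. m \<in> R \<Longrightarrow> T - {m} = insert i (insert j (R - {m}))" using iR jR by (auto simp: T_def)
    have Ti: "T - {i} = insert j R" using iR ij by (auto simp: T_def)
    have Tj: "T - {j} = insert i R" using jR ij by (auto simp: T_def)
    have TN: "T \<subseteq> N" using RN iN jN by (simp add: T_def)
    have MT: "{m\<in>T. T - {m} \<in> Wh} = T"
    proof -
      have "\<And>m. m \<in> T \<Longrightarrow> T - {m} \<in> Wh"
      proof -
        fix m assume m: "m \<in> T"
        show "T - {m} \<in> Wh"
        proof (cases "m = i")
          case True then show ?thesis using Ti RjWh RW by simp
        next
          case False then show ?thesis using TN m by (intro iWh) (auto simp: T_def)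
        qed
      qed
      then show ?thesis by auto
    qed
    have "real (card T) * alpha N Wh i T = (\<Sum>m\<in>T. alpha N Wh i (T - {m}))"
      using alpha_win[of N T Wh i] finN TN RijWh MT Ti RjWh RW
      by (simp add: decisive_def yes_decisive_def no_decisive_def T_def)
    also have "\<dots> = alpha N Wh i (T - {i}) + alpha N Wh i (T - {j}) + (\<Sum>m\<in>R. alpha N Wh i (T - {m}))"
      using finR iR jR ij by (simp add: T_def)
    also have "(\<Sum>m\<in>R. alpha N Wh i (T - {m})) = (\<Sum>m\<in>R. alpha N W j (insert j (R - {m})))"
    proof (rule sum.cong)
      fix m assume m: "m \<in> R"
      then show "alpha N Wh i (T - {m}) = alpha N W j (insert j (R - {m}))" using IH[OF m] Tm[OF m] by simp
    qed simp
    finally have "real (card R + 2) * alpha N Wh i T = real (card R + 2) * y"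
      using finR iR jR ij zRj ai yeq Ti Tj by (simp add: T_def algebra_simps)
    then have aij: "alpha N Wh i (insert i (insert j R)) = y"
      unfolding T_def by (metis mult_cancel_left of_nat_eq_0_iff add_eq_0_iff_both_eq_0 zero_neq_numeral)
    show ?thesis using ai aij by (simp add: y_def Wh_def)
  qed
qed




lemma sum_Pow_insert:
  assumes "finite A" "a \<notin> A"
  shows "sum f (Pow (insert a A)) = sum f (Pow A) + (\<Sum>T\<in>Pow A. f (insert a T))"
proof -
  have inj: "inj_on (insert a) (Pow A)"
    using assms(2) unfolding inj_on_def by (metis PowD insert_ident subsetD)
  have disj: "Pow A \<inter> insert a ` Pow A = {}" using assms(2) by auto
  have "sum f (Pow (insert a A)) = sum f (Pow A \<union> insert a ` Pow A)" by (simp add: Pow_insert)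
  also have "\<dots> = sum f (Pow A) + sum f (insert a ` Pow A)"
    using assms(1) disj by (intro sum.union_disjoint) auto
  also have "sum f (insert a ` Pow A) = (\<Sum>T\<in>Pow A. f (insert a T))"
    using inj by (simp add: sum.reindex)
  finally show ?thesis .
qed

lemma sum_Pow_fiber:
  assumes "finite N" "i \<in> N" "j \<in> N" "i \<noteq> j"
  shows "sum f (Pow N) = (\<Sum>R\<in>Pow (N - {i,j}).
           f R + f (insert j R) + f (insert i R) + f (insert i (insert j R)))"
proof -
  define N' where "N' = N - {i,j}"
  have N: "N = insert i (insert j N')" using assms by (auto simp: N'_def)
  have fin: "finite N'" using assms by (simp add: N'_def)
  have "sum f (Pow N) = sum f (Pow (insert j N')) + (\<Sum>T\<in>Pow (insert j N'). f (insert i T))"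
    unfolding N using fin assms by (intro sum_Pow_insert) (auto simp: N'_def)
  also have "sum f (Pow (insert j N')) = sum f (Pow N') + (\<Sum>T\<in>Pow N'. f (insert j T))"
    using fin by (intro sum_Pow_insert) (auto simp: N'_def)
  also have "(\<Sum>T\<in>Pow (insert j N'). f (insert i T)) = (\<Sum>T\<in>Pow N'. f (insert i T)) + (\<Sum>T\<in>Pow N'. f (insert i (insert j T)))"
    using fin sum_Pow_insert[of N' j "\<lambda>T. f (insert i T)"] by (auto simp: N'_def)
  finally show ?thesis by (simp add: sum.distrib N'_def algebra_simps)
qed

lemma fiber_yb:
  assumes svg: "svg N W" and iN: "i \<in> N" and jN: "j \<in> N" and ij: "i \<noteq> j"
    and yb: "yes_blocker W j" and R: "R \<subseteq> N - {i,j}"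
  defines "h \<equiv> alpha N (donate N W j i) i" and "g \<equiv> (\<lambda>T. alpha N W i T + alpha N W j T)"
  shows "h R + h (insert j R) + h (insert i R) + h (insert i (insert j R))
      \<le> g R + g (insert j R) + g (insert i R) + g (insert i (insert j R))"
proof -
  have finN: "finite N" using svg by (simp add: svg_def)
  have ybW: "\<And>X. X \<in> W \<Longrightarrow> j \<in> X" using yb by (simp add: yes_blocker_def)
  have RN: "R \<subseteq> N" and iR: "i \<notin> R" and jR: "j \<notin> R" using R by auto
  define x where "x = alpha N W j (insert i R)"
  have hh: "h R = x" "h (insert j R) = x" using yb_hat[OF svg iN jN ij yb R] by (simp_all add: h_def x_def)
  have P: "x \<le> g R" using yb_P[OF svg iN jN ij yb R] by (simp add: x_def g_def)
  have P2: "x \<le> g (insert i R)" using alpha_ge0[of N W i "insert i R"] by (simp add: x_def g_def)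
  have g0: "\<And>T. 0 \<le> g T" by (simp add: g_def alpha_ge0 add_nonneg_nonneg)
  have RiWh: "insert i R \<in> donate N W j i \<longleftrightarrow> insert i (insert j R) \<in> W"
  proof -
    have "insert i (insert j (insert i R)) = insert i (insert j R)" by auto
    then show ?thesis using don_i[of "insert i R" N i W j] RN iN by simp
  qed
  have RijWh: "insert i (insert j R) \<in> donate N W j i \<longleftrightarrow> insert i (insert j R) \<in> W"
  proof -
    have "insert i (insert j (insert i (insert j R))) = insert i (insert j R)" by auto
    then show ?thesis using don_i[of "insert i (insert j R)" N i W j] RN iN jN by simp
  qed
  have RWh: "R \<notin> donate N W j i" using don_noi[OF RN iR, of W j] ybW jR by blast
  have RjWh: "insert j R \<notin> donate N W j i"
  proof -
    have "insert j R - {j} = R" using jR by auto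
    then show ?thesis using don_noi[of "insert j R" N i W j] RN jN iR ij ybW jR by auto
  qed
  show ?thesis
  proof (cases "insert i (insert j R) \<in> W")
    case True
    have "insert i R - {i} = R" using iR by auto
    then have h1: "h (insert i R) = 1"
      unfolding h_def using finN RN iN RiWh True RWh
      by (intro alpha_dec) (auto simp: decisive_def yes_decisive_def)
    have "insert i (insert j R) - {i} = insert j R" using iR ij by auto
    then have h2: "h (insert i (insert j R)) = 1"
      unfolding h_def using finN RN iN jN RijWh True RjWh
      by (intro alpha_dec) (auto simp: decisive_def yes_decisive_def)
    have "insert i (insert j R) - {j} = insert i R" using jR ij by auto
    moreover have "insert i R \<notin> W" using ybW jR ij by blast
    ultimately have "alpha N W j (insert i (insert j R)) = 1"
      using finN RN iN jN True by (intro alpha_dec) (auto simp: decisive_def yes_decisive_def)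
    then have g1: "1 \<le> g (insert i (insert j R))" using alpha_ge0[of N W i "insert i (insert j R)"]
      by (simp add: g_def)
    have g2: "1 \<le> g (insert j R)"
    proof (cases "insert j R \<in> W")
      case True
      have "insert j R - {j} = R" using jR by auto
      moreover have "R \<notin> W" using ybW jR by blast
      ultimately have "alpha N W j (insert j R) = 1"
        using finN RN jN True by (intro alpha_dec) (auto simp: decisive_def yes_decisive_def)
      then show ?thesis using alpha_ge0[of N W i "insert j R"] by (simp add: g_def)
    next
      case False
      have "alpha N W i (insert j R) = 1"
        using finN RN jN iR ij False \<open>insert i (insert j R) \<in> W\<close>
        by (intro alpha_dec) (auto simp: decisive_def no_decisive_def)
      then show ?thesis using alpha_ge0[of N W j "insert j R"] by (simp add: g_def)
    qed
    show ?thesis using hh h1 h2 P P2 g1 g2 by simp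
  next
    case False
    have h1: "h (insert i R) = 0"
      unfolding h_def using finN RN iN RiWh False by (intro alpha_uns) (auto simp: successful_def)
    have h2: "h (insert i (insert j R)) = 0"
      unfolding h_def using finN RN iN jN RijWh False by (intro alpha_uns) (auto simp: successful_def)
    show ?thesis using hh h1 h2 P P2 g0[of "insert j R"] g0[of "insert i (insert j R)"] by simp
  qed
qed

lemma fiber_nb:
  assumes svg: "svg N W" and iN: "i \<in> N" and jN: "j \<in> N" and ij: "i \<noteq> j"
    and nb: "no_blocker N W j" and R: "R \<subseteq> N - {i,j}"
  defines "h \<equiv> alpha N (donate N W j i) i" and "g \<equiv> (\<lambda>T. alpha N W i T + alpha N W j T)"
  shows "h R + h (insert j R) + h (insert i R) + h (insert i (insert j R))
      \<le> g R + g (insert j R) + g (insert i R) + g (insert i (insert j R))"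
proof -
  have finN: "finite N" using svg by (simp add: svg_def)
  have nbW: "\<And>X. X \<subseteq> N \<Longrightarrow> j \<in> X \<Longrightarrow> X \<in> W" using nb by (auto simp: no_blocker_def)
  have RN: "R \<subseteq> N" and iR: "i \<notin> R" and jR: "j \<notin> R" using R by auto
  define y where "y = alpha N W j (insert j R)"
  have hh: "h (insert i R) = y" "h (insert i (insert j R)) = y"
    using nb_hat[OF svg iN jN ij nb R] by (simp_all add: h_def y_def)
  have Q: "y \<le> g (insert i (insert j R))" using nb_Q[OF svg iN jN ij nb R] by (simp add: y_def g_def)
  have Q2: "y \<le> g (insert j R)" using alpha_ge0[of N W i "insert j R"] by (simp add: y_def g_def)
  have g0: "\<And>T. 0 \<le> g T" by (simp add: g_def alpha_ge0 add_nonneg_nonneg)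
  have RWh: "R \<in> donate N W j i \<longleftrightarrow> R \<in> W"
  proof -
    have "R - {j} = R" using jR by auto
    then show ?thesis using don_noi[OF RN iR, of W j] by simp
  qed
  have RjWh: "insert j R \<in> donate N W j i \<longleftrightarrow> R \<in> W"
  proof -
    have "insert j R - {j} = R" using jR by auto
    then show ?thesis using don_noi[of "insert j R" N i W j] RN jN iR ij by auto
  qed
  have iWh: "\<And>X. X \<subseteq> N \<Longrightarrow> i \<in> X \<Longrightarrow> X \<in> donate N W j i"
  proof -
    fix X assume X: "X \<subseteq> N" "i \<in> X"
    have "insert i (insert j X) \<in> W" using X jN by (intro nbW) auto
    then show "X \<in> donate N W j i" using don_i[OF X, of W j] by simp
  qed
  show ?thesis
  proof (cases "R \<in> W")
    case False
    have h1: "h R = 1"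
      unfolding h_def using finN RN iN iR RWh False iWh[of "insert i R"]
      by (intro alpha_dec) (auto simp: decisive_def no_decisive_def)
    have h2: "h (insert j R) = 1"
      unfolding h_def using finN RN iN jN iR ij RjWh False iWh[of "insert i (insert j R)"]
      by (intro alpha_dec) (auto simp: decisive_def no_decisive_def)
    have "alpha N W j R = 1"
      using finN RN jN jR False nbW[of "insert j R"]
      by (intro alpha_dec) (auto simp: decisive_def no_decisive_def)
    then have g1: "1 \<le> g R" using alpha_ge0[of N W i R] by (simp add: g_def)
    have g2: "1 \<le> g (insert i R)"
    proof (cases "insert i R \<in> W")
      case True
      have "insert i R - {i} = R" using iR by auto
      then have "alpha N W i (insert i R) = 1"
        using finN RN iN True False by (intro alpha_dec) (auto simp: decisive_def yes_decisive_def)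
      then show ?thesis using alpha_ge0[of N W j "insert i R"] by (simp add: g_def)
    next
      case nW: False
      have "insert j (insert i R) \<in> W" using RN iN jN by (intro nbW) auto
      then have "alpha N W j (insert i R) = 1"
        using finN RN iN jR ij nW by (intro alpha_dec) (auto simp: decisive_def no_decisive_def)
      then show ?thesis using alpha_ge0[of N W i "insert i R"] by (simp add: g_def)
    qed
    show ?thesis using hh h1 h2 Q Q2 g1 g2 by simp
  next
    case True
    have h1: "h R = 0"
      unfolding h_def using finN RN iR RWh True by (intro alpha_uns) (auto simp: successful_def)
    have h2: "h (insert j R) = 0"
      unfolding h_def using finN RN jN iR ij RjWh True by (intro alpha_uns) (auto simp: successful_def)
    show ?thesis using hh h1 h2 Q Q2 g0[of R] g0[of "insert i R"] by simp
  qed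
qed

theorem lemma1:
  fixes N :: "'a set" and W :: "'a set set" and i j :: 'a
  assumes "svg N W"
    and "i \<in> N" and "j \<in> N" and "i \<noteq> j"
    and "yes_blocker W j \<or> no_blocker N W j"
  shows "RM' N (donate N W j i) i \<le> RM' N W i + RM' N W j"
proof -
  have finN: "finite N" using assms(1) by (simp add: svg_def)
  define h where "h = alpha N (donate N W j i) i"
  define g where "g = (\<lambda>T. alpha N W i T + alpha N W j T)"
  have fib: "\<And>R. R \<in> Pow (N - {i,j}) \<Longrightarrow>
      h R + h (insert j R) + h (insert i R) + h (insert i (insert j R))
      \<le> g R + g (insert j R) + g (insert i R) + g (insert i (insert j R))"
  proof -
    fix R assume "R \<in> Pow (N - {i,j})"
    then have R: "R \<subseteq> N - {i,j}" by simp
    show "h R + h (insert j R) + h (insert i R) + h (insert i (insert j R))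
      \<le> g R + g (insert j R) + g (insert i R) + g (insert i (insert j R))"
    proof (cases "yes_blocker W j")
      case True
      show ?thesis unfolding h_def g_def by (rule fiber_yb[OF assms(1-4) True R])
    next
      case False
      then have nb: "no_blocker N W j" using assms(5) by simp
      show ?thesis unfolding h_def g_def by (rule fiber_nb[OF assms(1-4) nb R])
    qed
  qed
  have "sum h (Pow N) \<le> sum g (Pow N)"
    unfolding sum_Pow_fiber[OF finN assms(2-4), of h] sum_Pow_fiber[OF finN assms(2-4), of g]
    using fib by (rule sum_mono)
  then have "sum h (Pow N) / 2 ^ card N \<le> sum g (Pow N) / 2 ^ card N"
    by (simp add: divide_right_mono)
  then show ?thesis
    by (simp add: RM'_def h_def g_def sum.distrib add_divide_distrib)
qed


end
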